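(* Let $\mathbf{x}\in\Delta^0$. Then: (1) for every $\tilde{\mathbf{x}}\in\mathcal{P}(\mathbf{x})\cap\Delta^0$ we have $f(\tilde{\mathbf{x}})=f(\mathbf{x})$; (2) for every nonzero $\mathbf{d}\in\mathbb{R}^n$ such that $\mathbf{x}+t\mathbf{d}\in\Delta^0$ for all sufficiently small $t>0$, we have $\mathbf{d}^{\mathsf T}\nabla^2 f(\mathbf{x})\mathbf{d}<0$.
   Context: Let $G=(\mathcal{V},\mathcal{E})$ be a simple undirected graph on vertex set $\mathcal{V}=\{1,\dots,n\}$ with adjacency matrix $\mathbf{A}=(a_{ij})$ ($a_{ij}=1$ if $(i,j)\in\mathcal{E}$, else $0$; $a_{ii}=0$). A clique is a subset $C\subseteq\mathcal{V}$ with $(i,j)\in\mathcal{E}$ for all distinct $i,j\in C$. Let $\Delta=\{\mathbf{x}\in\mathbb{R}^n:\mathbf{0}\le\mathbf{x}\le\mathbf{1},\ \mathbf{1}^{\mathsf T}\mathbf{x}=1\}$. For $\mathbf{x}\in\mathbb{R}^n$, $\mathrm{supp}(\mathbf{x})=\{i:x_i\neq0\}$. Let $\Delta^0=\{\mathbf{x}\in\Delta:\mathrm{supp}(\mathbf{x})\text{ is a clique}\}$. For $\mathbf{x}\in\Delta$, $\mathcal{P}(\mathbf{x})=\{\tilde{\mathbf{x}}\in\Delta:\exists$ a permutation $\sigma$ of $\{1,\dots,n\}$ with $\tilde x_i=x_{\sigma(i)}$ for all $i\}$. Let $\Phi:X\to\mathbb{R}$ be twice continuously differentiable on an open set $X\supset\Delta$,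 satisfying for every $\mathbf{x}\in\Delta$: (C1) $\nabla^2\Phi(\mathbf{x})$ is positive semidefinite; (C2) $\|\nabla^2\Phi(\mathbf{x})\|_2<2$ (spectral norm); (C3) $\Phi$ is constant on $\mathcal{P}(\mathbf{x})$. Define $f(\mathbf{x})=\mathbf{x}^{\mathsf T}\mathbf{A}\mathbf{x}+\Phi(\mathbf{x})$. *)

theory Defs
  imports "HOL-Analysis.Analysis"
begin

definition std_simplex :: "(real^'n) set" where
  "std_simplex = {x. (\<forall>i. 0 \<le> x$i \<and> x$i \<le> 1) \<and> (\<Sum>i\<in>UNIV. x$i) = 1}"

definition supp :: "real^'n \<Rightarrow> 'n set" where
  "supp x = {i. x$i \<noteq> 0}"

definition is_clique :: "('n \<Rightarrow> 'n \<Rightarrow> bool) \<Rightarrow> 'n set \<Rightarrow> bool" where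
  "is_clique E C \<longleftrightarrow> (\<forall>i\<in>C. \<forall>j\<in>C. i \<noteq> j \<longrightarrow> E i j)"

definition std_simplex0 :: "('n \<Rightarrow> 'n \<Rightarrow> bool) \<Rightarrow> (real^'n) set" where
  "std_simplex0 E = {x \<in> std_simplex. is_clique E (supp x)}"

definition perms :: "real^'n \<Rightarrow> (real^'n) set" where
  "perms x = {y \<in> std_simplex. \<exists>\<sigma>. \<sigma> permutes (UNIV::'n set) \<and> (\<forall>i. y$i = x$(\<sigma> i))}"

definition adj :: "('n \<Rightarrow> 'n \<Rightarrow> bool) \<Rightarrow> real^'n^'n" where
  "adj E = (\<chi> i j. if E i j then 1 else 0)"

definition is_hessian :: "(real^'n \<Rightarrow> real) \<Rightarrow> real^'n \<Rightarrow> real^'n^'n \<Rightarrow> bool" where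
  "is_hessian f x H \<longleftrightarrow> (\<exists>g e. e > 0 \<and>
      (\<forall>y\<in>ball x e. (f has_derivative (\<lambda>h. g y \<bullet> h)) (at y)) \<and>
      (g has_derivative (\<lambda>h. H *v h)) (at x))"

end

theory Submission
  imports Defs
begin

lemma clique_quad:
  fixes E :: "'n::finite \<Rightarrow> 'n \<Rightarrow> bool" and y :: "real^'n"
  assumes irrefl: "\<And>i. \<not> E i i" and cl: "is_clique E (supp y)"
  shows "y \<bullet> (adj E *v y) = (\<Sum>i\<in>UNIV. y$i)^2 - (\<Sum>i\<in>UNIV. (y$i)^2)"
proof -
  have trm: "y$i * ((adj E)$i$j * y$j) = (if i = j then 0 else y$i * y$j)" for i j
  proof (cases "y$i = 0 \<or> y$j = 0")
    case True then show ?thesis by auto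
  next
    case False
    then have "i \<in> supp y" "j \<in> supp y" by (auto simp: supp_def)
    then show ?thesis using cl irrefl unfolding is_clique_def adj_def by auto
  qed
  have "y \<bullet> (adj E *v y) = (\<Sum>i\<in>UNIV. \<Sum>j\<in>UNIV. y$i * ((adj E)$i$j * y$j))"
    by (simp add: inner_vec_def matrix_vector_mult_def sum_distrib_left)
  also have "\<dots> = (\<Sum>i\<in>UNIV. \<Sum>j\<in>UNIV. y$i * y$j - (if i = j then y$i * y$j else 0))"
    by (simp add: trm if_distrib cong: if_cong)
  also have "\<dots> = (\<Sum>i\<in>UNIV. \<Sum>j\<in>UNIV. y$i * y$j) - (\<Sum>i\<in>UNIV. (y$i)^2)"
    by (simp add: sum_subtractf power2_eq_square)
  also have "(\<Sum>i\<in>UNIV. \<Sum>j\<in>UNIV. y$i * y$j) = (\<Sum>i\<in>UNIV. y$i)^2"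
    by (simp add: power2_eq_square sum_product)
  finally show ?thesis .
qed

theorem lemma1:
  fixes E :: "'n::finite \<Rightarrow> 'n \<Rightarrow> bool"
    and \<Phi> :: "real^'n \<Rightarrow> real"
    and grad\<Phi> :: "real^'n \<Rightarrow> real^'n"
    and H\<Phi> :: "real^'n \<Rightarrow> real^'n^'n"
    and X :: "(real^'n) set"
    and f :: "real^'n \<Rightarrow> real"
    and x :: "real^'n"
  assumes sym: "\<And>i j. E i j \<Longrightarrow> E j i"
    and irrefl: "\<And>i. \<not> E i i"
    and X_open: "open X"
    and X_sup: "std_simplex \<subseteq> X"
    and grad: "\<And>y. y \<in> X \<Longrightarrow> (\<Phi> has_derivative (\<lambda>h. grad\<Phi> y \<bullet> h)) (at y)"
    and hess: "\<And>y. y \<in> X \<Longrightarrow> (grad\<Phi> has_derivative (\<lambda>h. H\<Phi> y *v h)) (at y)"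
    and hess_cont: "continuous_on X H\<Phi>"
    and C1: "\<And>y v. y \<in> std_simplex \<Longrightarrow> v \<bullet> (H\<Phi> y *v v) \<ge> 0"
    and C2: "\<And>y. y \<in> std_simplex \<Longrightarrow> onorm (\<lambda>v. H\<Phi> y *v v) < 2"
    and C3: "\<And>y z. y \<in> std_simplex \<Longrightarrow> z \<in> perms y \<Longrightarrow> \<Phi> z = \<Phi> y"
    and f_def: "\<And>y. f y = y \<bullet> (adj E *v y) + \<Phi> y"
    and x: "x \<in> std_simplex0 E"
  shows "(\<forall>z \<in> perms x \<inter> std_simplex0 E. f z = f x) \<and>
         (\<forall>d. d \<noteq> 0 \<and> (\<exists>\<epsilon>>0. \<forall>t. 0 < t \<and> t < \<epsilon> \<longrightarrow> x + t *\<^sub>R d \<in> std_simplex0 E) \<longrightarrow>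
              (\<forall>H. is_hessian f x H \<longrightarrow> d \<bullet> (H *v d) < 0))"
proof (intro conjI ballI allI impI)
  have xS: "x \<in> std_simplex" and xc: "is_clique E (supp x)"
    using x by (auto simp: std_simplex0_def)
  {
    fix z assume z: "z \<in> perms x \<inter> std_simplex0 E"
    then have zS: "z \<in> std_simplex" and zc: "is_clique E (supp z)"
      by (auto simp: std_simplex0_def)
    from z obtain \<sigma> where s: "\<sigma> permutes (UNIV::'n set)" "\<forall>i. z$i = x$(\<sigma> i)"
      by (auto simp: perms_def)
    have sq: "(\<Sum>i\<in>UNIV. (z$i)^2) = (\<Sum>i\<in>UNIV. (x$i)^2)"
    proof -
      have "(\<Sum>i\<in>UNIV. (z$i)^2) = (\<Sum>i\<in>UNIV. ((\<lambda>k. (x$k)^2) \<circ> \<sigma>) i)"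
        using s(2) by simp
      also have "\<dots> = (\<Sum>i\<in>UNIV. (x$i)^2)"
        using sum.reindex_bij_betw[OF permutes_imp_bij[OF s(1)], of "\<lambda>k. (x$k)^2"]
        by simp
      finally show ?thesis .
    qed
    have s1: "(\<Sum>i\<in>UNIV. z$i) = (\<Sum>i\<in>UNIV. x$i)"
      using zS xS by (simp add: std_simplex_def)
    have "\<Phi> z = \<Phi> x" using C3[OF xS] z by auto
    then show "f z = f x"
      unfolding f_def using clique_quad[OF irrefl zc] clique_quad[OF irrefl xc] sq s1 by simp
  }
  fix d H
  assume dh: "d \<noteq> 0 \<and> (\<exists>\<epsilon>>0. \<forall>t. 0 < t \<and> t < \<epsilon> \<longrightarrow> x + t *\<^sub>R d \<in> std_simplex0 E)"
  assume hs: "is_hessian f x H"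
  from dh obtain \<epsilon> where ep: "\<epsilon> > 0" "\<And>t. 0 < t \<Longrightarrow> t < \<epsilon> \<Longrightarrow> x + t *\<^sub>R d \<in> std_simplex0 E"
    by blast
  have d0: "d \<noteq> 0" using dh by blast
  have "x + (\<epsilon>/2) *\<^sub>R d \<in> std_simplex" using ep by (auto simp: std_simplex0_def)
  then have "(\<Sum>i\<in>UNIV. x$i + (\<epsilon>/2) * d$i) = 1" by (simp add: std_simplex_def)
  then have "(\<Sum>i\<in>UNIV. x$i) + (\<epsilon>/2) * (\<Sum>i\<in>UNIV. d$i) = 1"
    by (simp add: sum.distrib sum_distrib_left)
  then have sd: "(\<Sum>i\<in>UNIV. d$i) = 0" using xS ep(1) by (simp add: std_simplex_def)
  have dc: "is_clique E (supp d)"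
    unfolding is_clique_def
  proof (intro ballI impI)
    fix i j assume i: "i \<in> supp d" and j: "j \<in> supp d" and ij: "i \<noteq> j"
    have di: "d$i \<noteq> 0" and dj: "d$j \<noteq> 0" using i j by (auto simp: supp_def)
    have uni: "t1 = t2" if "x$k + t1 * d$k = 0" "x$k + t2 * d$k = 0" "d$k \<noteq> 0" for k t1 t2
      using that by (metis add_left_cancel mult_right_cancel)
    have "\<exists>t\<in>{\<epsilon>/2, \<epsilon>/3, \<epsilon>/4}. x$i + t * d$i \<noteq> 0 \<and> x$j + t * d$j \<noteq> 0"
    proof (rule ccontr)
      assume "\<not> ?thesis"
      then have a: "\<forall>t\<in>{\<epsilon>/2, \<epsilon>/3, \<epsilon>/4}. x$i + t * d$i = 0 \<or> x$j + t * d$j = 0" by blast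
      have ne: "\<epsilon>/2 \<noteq> \<epsilon>/3" "\<epsilon>/2 \<noteq> \<epsilon>/4" "\<epsilon>/3 \<noteq> \<epsilon>/4" using ep(1) by auto
      have a2: "x$i + (\<epsilon>/2) * d$i = 0 \<or> x$j + (\<epsilon>/2) * d$j = 0"
        and a3: "x$i + (\<epsilon>/3) * d$i = 0 \<or> x$j + (\<epsilon>/3) * d$j = 0"
        and a4: "x$i + (\<epsilon>/4) * d$i = 0 \<or> x$j + (\<epsilon>/4) * d$j = 0" using a by auto
      show False using a2 a3 a4 ne uni[OF _ _ di] uni[OF _ _ dj] by metis
    qed
    then obtain t where t: "t \<in> {\<epsilon>/2, \<epsilon>/3, \<epsilon>/4}" "x$i + t * d$i \<noteq> 0" "x$j + t * d$j \<noteq> 0"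
      by blast
    have "0 < t" "t < \<epsilon>" using t(1) ep(1) by auto
    then have "is_clique E (supp (x + t *\<^sub>R d))" using ep(2) by (auto simp: std_simplex0_def)
    moreover have "i \<in> supp (x + t *\<^sub>R d)" "j \<in> supp (x + t *\<^sub>R d)"
      using t by (auto simp: supp_def)
    ultimately show "E i j" using ij by (auto simp: is_clique_def)
  qed
  have dAd: "d \<bullet> (adj E *v d) = - (norm d * norm d)"
  proof -
    have "norm d * norm d = d \<bullet> d" by (metis power2_eq_square power2_norm_eq_inner)
    then show ?thesis using clique_quad[OF irrefl dc] sd
      by (simp add: inner_vec_def power2_eq_square)
  qed
  define A where "A = adj E"
  have At: "transpose A = A" unfolding A_def
    by (auto simp: vec_eq_iff transpose_def adj_def intro: sym)
  have xX: "x \<in> X" using xS X_sup by blast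
  define G where "G y = 2 *\<^sub>R (A *v y) + grad\<Phi> y" for y
  have Gd: "(G has_derivative (\<lambda>h. 2 *\<^sub>R (A *v h) + H\<Phi> x *v h)) (at x)"
    unfolding G_def
    by (intro has_derivative_add has_derivative_scaleR_right hess[OF xX]
        bounded_linear.has_derivative[OF matrix_vector_mul_bounded_linear] has_derivative_ident)
  have fd: "(f has_derivative (\<lambda>h. G y \<bullet> h)) (at y)" if "y \<in> X" for y
  proof -
    have q: "((\<lambda>y. y \<bullet> (A *v y)) has_derivative (\<lambda>h. y \<bullet> (A *v h) + h \<bullet> (A *v y))) (at y)"
      by (intro has_derivative_inner has_derivative_ident
          bounded_linear.has_derivative[OF matrix_vector_mul_bounded_linear])
    have e: "y \<bullet> (A *v h) = (A *v y) \<bullet> h" for h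
      using At by (metis dot_lmul_matrix inner_commute vector_transpose_matrix)
    have "((\<lambda>y. y \<bullet> (A *v y) + \<Phi> y) has_derivative
       (\<lambda>h. y \<bullet> (A *v h) + h \<bullet> (A *v y) + grad\<Phi> y \<bullet> h)) (at y)"
      by (intro has_derivative_add q grad that)
    moreover have "(\<lambda>h. y \<bullet> (A *v h) + h \<bullet> (A *v y) + grad\<Phi> y \<bullet> h) = (\<lambda>h. G y \<bullet> h)"
      by (rule ext) (simp add: G_def e inner_add_left inner_add_right inner_commute)
    moreover have "(\<lambda>y. y \<bullet> (A *v y) + \<Phi> y) = f" by (rule ext) (simp add: f_def A_def)
    ultimately show ?thesis by simp
  qed
  from hs obtain g e where ge: "e > 0" "\<forall>y\<in>ball x e. (f has_derivative (\<lambda>h. g y \<bullet> h)) (at y)"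
      "(g has_derivative (\<lambda>h. H *v h)) (at x)"
    unfolding is_hessian_def by blast
  have gG: "g y = G y" if "y \<in> ball x e \<inter> X" for y
  proof -
    have "(\<lambda>h. g y \<bullet> h) = (\<lambda>h. G y \<bullet> h)"
      using has_derivative_unique[OF bspec[OF ge(2)] fd] that by auto
    then have "(g y - G y) \<bullet> (g y - G y) = 0"
      by (metis inner_diff_left right_minus_eq)
    then show ?thesis by simp
  qed
  have "(G has_derivative (\<lambda>h. H *v h)) (at x)"
    using has_derivative_transform_within_open[OF ge(3), of "ball x e \<inter> X" G] gG
      ge(1) xX X_open by auto
  then have Hh: "(\<lambda>h. H *v h) = (\<lambda>h. 2 *\<^sub>R (A *v h) + H\<Phi> x *v h)"
    using has_derivative_unique Gd by blast
  have "d \<bullet> (H *v d) = 2 * (d \<bullet> (A *v d)) + d \<bullet> (H\<Phi> x *v d)"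
    using fun_cong[OF Hh, of d] by (simp add: inner_add_right)
  also have "d \<bullet> (H\<Phi> x *v d) \<le> norm d * (onorm (\<lambda>v. H\<Phi> x *v v) * norm d)"
    using Cauchy_Schwarz_ineq2[of d "H\<Phi> x *v d"]
      onorm[OF matrix_vector_mul_bounded_linear, of "H\<Phi> x" d]
    by (meson mult_left_mono norm_ge_zero order_trans abs_le_iff)
  also have "\<dots> < norm d * (2 * norm d)"
    using C2[OF xS] d0 by (intro mult_strict_left_mono) auto
  finally show "d \<bullet> (H *v d) < 0" using dAd unfolding A_def
    by (simp add: power2_eq_square)
qed

end
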